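(* Let $E$ be a Banach lattice and let $T\colon E\to E$ be an order bounded, disjoint preserving operator which is $uaw$-Dunford-Pettis. Then the modulus $|T|$ of $T$ exists and is $uaw$-Dunford-Pettis.
   Context: A net $(x_\alpha)$ in a Banach lattice $E$ is $uaw$-convergent to $x$ if $|x_\alpha-x|\wedge u\to 0$ weakly for every $u\in E_+$. A bounded operator $T\colon E\to E$ is $uaw$-Dunford-Pettis if every norm bounded $uaw$-null sequence $(x_n)$ in $E$ satisfies $\|Tx_n\|\to 0$. An operator $T$ is disjoint preserving if $x\perp y$ implies $Tx\perp Ty$. *)

theory Defs
  imports "HOL-Analysis.Analysis"
begin

class banach_lattice = banach + ordered_real_vector + lattice +
  assumes lattice_norm: "sup x (- x) \<le> sup y (- y) \<Longrightarrow> norm x \<le> norm y"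

definition labs :: "'a::banach_lattice \<Rightarrow> 'a" where
  "labs x = sup x (- x)"

definition disjoint_el :: "'a::banach_lattice \<Rightarrow> 'a \<Rightarrow> bool" where
  "disjoint_el x y \<longleftrightarrow> inf (labs x) (labs y) = 0"

definition weakly_tendsto :: "('i \<Rightarrow> 'a::banach_lattice) \<Rightarrow> 'a \<Rightarrow> 'i filter \<Rightarrow> bool" where
  "weakly_tendsto xs x F \<longleftrightarrow>
     (\<forall>f::'a \<Rightarrow> real. bounded_linear f \<longrightarrow> ((\<lambda>i. f (xs i)) \<longlongrightarrow> f x) F)"

definition uaw_tendsto :: "('i \<Rightarrow> 'a::banach_lattice) \<Rightarrow> 'a \<Rightarrow> 'i filter \<Rightarrow> bool" where
  "uaw_tendsto xs x F \<longleftrightarrow>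
     (\<forall>u. 0 \<le> u \<longrightarrow> weakly_tendsto (\<lambda>i. inf (labs (xs i - x)) u) 0 F)"

definition uaw_DP :: "('a::banach_lattice \<Rightarrow> 'a) \<Rightarrow> bool" where
  "uaw_DP T \<longleftrightarrow> bounded_linear T \<and>
     (\<forall>xs::nat \<Rightarrow> 'a. bounded (range xs) \<and> uaw_tendsto xs 0 sequentially
        \<longrightarrow> ((\<lambda>n. norm (T (xs n))) \<longlongrightarrow> 0) sequentially)"

definition order_bounded_op :: "('a::banach_lattice \<Rightarrow> 'a) \<Rightarrow> bool" where
  "order_bounded_op T \<longleftrightarrow> (\<forall>x y. x \<le> y \<longrightarrow> (\<exists>a b. T ` {x..y} \<subseteq> {a..b}))"

definition disjoint_preserving :: "('a::banach_lattice \<Rightarrow> 'a) \<Rightarrow> bool" where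
  "disjoint_preserving T \<longleftrightarrow> (\<forall>x y. disjoint_el x y \<longrightarrow> disjoint_el (T x) (T y))"

definition Lb :: "('a::banach_lattice \<Rightarrow> 'a) set" where
  "Lb = {T. linear T \<and> order_bounded_op T}"

definition op_le :: "('a::banach_lattice \<Rightarrow> 'a) \<Rightarrow> ('a \<Rightarrow> 'a) \<Rightarrow> bool" where
  "op_le S R \<longleftrightarrow> (\<forall>x. 0 \<le> x \<longrightarrow> S x \<le> R x)"

definition is_modulus :: "('a::banach_lattice \<Rightarrow> 'a) \<Rightarrow> ('a \<Rightarrow> 'a) \<Rightarrow> bool" where
  "is_modulus T S \<longleftrightarrow> S \<in> Lb \<and> op_le T S \<and> op_le (\<lambda>x. - T x) S \<and>
     (\<forall>R\<in>Lb. op_le T R \<and> op_le (\<lambda>x. - T x) R \<longrightarrow> op_le S R)"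

end

theory Submission imports Defs "HOL-Library.Lattice_Algebras" begin
subclass (in banach_lattice) lattice_ab_group_add ..

definition pp :: "'a::banach_lattice \<Rightarrow> 'a" where "pp a = sup a 0"
definition nn :: "'a::banach_lattice \<Rightarrow> 'a" where "nn a = sup (- a) 0"

lemma labs_pos: "0 \<le> labs (a::'a::banach_lattice)" unfolding labs_def
proof -
  have "a + - a \<le> sup a (- a) + sup a (- a)" by (intro add_mono) simp_all
  then have "0 \<le> sup a (- a) + sup a (- a)" by simp
  then show "0 \<le> sup a (- a)" by simp
qed
lemma labs_id: "0 \<le> (a::'a::banach_lattice) \<Longrightarrow> labs a = a" unfolding labs_def
proof -
  assume "0 \<le> a"
  then have "- a \<le> a" using order_trans[of "-a" 0 a] by simp
  then show "sup a (- a) = a" by (rule sup_absorb1)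
qed
lemma labs_minus: "labs (- a) = labs (a::'a::banach_lattice)" unfolding labs_def by (metis minus_minus sup_commute)
lemma labs_ge: "a \<le> labs a" "- a \<le> labs (a::'a::banach_lattice)" unfolding labs_def by auto
lemma labs_le: "a \<le> w \<Longrightarrow> - a \<le> w \<Longrightarrow> labs a \<le> (w::'a::banach_lattice)" unfolding labs_def by auto
lemma labs_tri: "labs (a + b) \<le> labs a + labs (b::'a::banach_lattice)"
proof (rule labs_le)
  show "a + b \<le> labs a + labs b" by (intro add_mono labs_ge)
  have "- (a + b) = - a + - b" by simp
  also have "\<dots> \<le> labs a + labs b" by (intro add_mono labs_ge)
  finally show "- (a + b) \<le> labs a + labs b" .
qed

lemma pos_inf_add_le:
  fixes a b c :: "'a::banach_lattice"
  assumes h: "0 \<le> a" "0 \<le> b" "0 \<le> c"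
  shows "inf a (b + c) \<le> inf a b + inf a c"
proof -
  have ic: "0 \<le> inf a c" using h by simp
  have 1: "inf a (b+c) \<le> a + inf a c"
    by (rule order_trans[OF inf_le1 add_increasing2[OF ic order_refl]])
  have "a \<le> b + a" using h by (simp add: add_increasing)
  then have "inf a (b+c) \<le> inf (b + a) (b + c)"
    by (rule inf_mono[OF _ order_refl])
  then have 2: "inf a (b+c) \<le> b + inf a c" by (simp add: add_inf_distrib_left)
  have "inf a b + inf a c = inf (a + inf a c) (b + inf a c)" by (simp add: add_inf_distrib_right)
  then show ?thesis using 1 2 by simp
qed

lemma pn_decomp: "a = pp a - nn (a::'a::banach_lattice)"
proof -
  have "nn a = - inf a 0" unfolding nn_def using neg_inf_eq_sup[of a 0] by simp
  then have "pp a - nn a = sup a 0 + inf a 0" by (simp add: pp_def)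
  also have "\<dots> = a + 0" by (rule add_eq_inf_sup[symmetric])
  finally show ?thesis by simp
qed
lemma pp_pos: "0 \<le> pp (a::'a::banach_lattice)" unfolding pp_def by auto
lemma nn_pos: "0 \<le> nn (a::'a::banach_lattice)" unfolding nn_def by auto

lemma labs_sup_inf: "labs (p - n) = sup p n - inf p (n::'a::banach_lattice)"
proof -
  have s1: "p + sup (-p) (-n) = sup 0 (p - n)" by (subst add_sup_distrib_left) simp
  have s2: "n + sup (-p) (-n) = sup (n - p) 0" by (subst add_sup_distrib_left) simp
  have "sup p n - inf p n = sup p n + sup (- p) (- n)"
    by (simp add: diff_inf_eq_sup)
  also have "\<dots> = sup (sup 0 (p - n)) (sup (n - p) 0)"
    by (subst add_sup_distrib_right) (simp only: s1 s2)
  also have "\<dots> = sup 0 (labs (p - n))" unfolding labs_def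
    by (simp add: sup_aci)
  also have "\<dots> = labs (p - n)" by (rule sup_absorb2[OF labs_pos])
  finally show ?thesis by simp
qed

lemma labs_pn: "labs a = pp a + nn (a::'a::banach_lattice)"
proof -
  have s1: "a + sup (-a) 0 = sup 0 a" by (subst add_sup_distrib_left) simp
  have "pp a + nn a = sup (sup 0 a) (sup (-a) 0)"
    unfolding pp_def nn_def by (subst add_sup_distrib_right) (simp only: s1 add_0_left)
  also have "\<dots> = sup 0 (labs a)" unfolding labs_def by (simp add: sup_aci)
  also have "\<dots> = labs a" by (rule sup_absorb2[OF labs_pos])
  finally show ?thesis by simp
qed

lemma pn_disj: "inf (pp a) (nn a) = (0::'a::banach_lattice)"
proof -
  have "labs a = labs (pp a - nn a)" by (rule arg_cong[OF pn_decomp])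
  also have "\<dots> = sup (pp a) (nn a) - inf (pp a) (nn a)" by (rule labs_sup_inf)
  finally have 1: "labs a = sup (pp a) (nn a) - inf (pp a) (nn a)" .
  have 2: "labs a = sup (pp a) (nn a) + inf (pp a) (nn a)"
    using labs_pn add_eq_inf_sup by metis
  from 1 2 have "- inf (pp a) (nn a) = inf (pp a) (nn a)" by (simp add: diff_conv_add_uminus)
  then have "inf (pp a) (nn a) + inf (pp a) (nn a) = 0"
    using neg_eq_iff_add_eq_0[of "inf (pp a) (nn a)" "inf (pp a) (nn a)"] by simp
  then show ?thesis by simp
qed

lemma pp_le: "pp a \<le> labs (a::'a::banach_lattice)"
  using labs_pn[of a] nn_pos[of a] by (simp add: add_increasing2)
lemma nn_le: "nn a \<le> labs (a::'a::banach_lattice)"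
  using labs_pn[of a] pp_pos[of a] by (simp add: add_increasing)

lemma disj_pos_labs: "inf p n = 0 \<Longrightarrow> labs (p - n) = p + (n::'a::banach_lattice)"
  by (metis labs_sup_inf add_eq_inf_sup diff_zero add_0_right)

lemma disj_add: fixes u v :: "'a::banach_lattice" assumes "inf (labs u) (labs v) = 0"
  shows "labs (u + v) = labs u + labs v"
proof -
  define P where "P = pp u + pp v"
  define N where "N = nn u + nn v"
  have uv: "u + v = P - N" unfolding P_def N_def
    by (metis pn_decomp add_diff_add)
  have z: "inf a b = 0" if "a \<le> labs u" "b \<le> labs v" "0 \<le> a" "0 \<le> b" for a b
  proof -
    have "inf a b \<le> inf (labs u) (labs v)" using that by (auto intro: le_infI1 le_infI2)
    then show ?thesis using assms that by (simp add: antisym)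
  qed
  have z': "inf a b = 0" if "a \<le> labs v" "b \<le> labs u" "0 \<le> a" "0 \<le> b" for a b
    using z[of b a] that by (simp add: inf_commute)
  have a1: "inf P N \<le> inf (pp u) N + inf (pp v) N"
    using pos_inf_add_le[of N "pp u" "pp v"] pp_pos nn_pos unfolding P_def N_def
    by (metis inf_commute add_nonneg_nonneg)
  have a2: "inf (pp u) N \<le> inf (pp u) (nn u) + inf (pp u) (nn v)"
    unfolding N_def by (rule pos_inf_add_le; simp add: pp_pos nn_pos)
  have a3: "inf (pp v) N \<le> inf (pp v) (nn u) + inf (pp v) (nn v)"
    unfolding N_def by (rule pos_inf_add_le; simp add: pp_pos nn_pos)
  have "inf (pp u) (nn v) = 0" by (rule z[OF pp_le nn_le pp_pos nn_pos])
  moreover have "inf (pp v) (nn u) = 0" by (rule z'[OF pp_le nn_le pp_pos nn_pos])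
  ultimately have "inf (pp u) N \<le> 0" "inf (pp v) N \<le> 0"
    using a2 a3 by (simp_all only: pn_disj add_0_right)
  then have "inf (pp u) N + inf (pp v) N \<le> 0 + 0" by (rule add_mono)
  then have "inf P N \<le> 0" using a1 by simp
  moreover have "0 \<le> inf P N" unfolding P_def N_def by (simp add: pp_pos nn_pos add_nonneg_nonneg)
  ultimately have "inf P N = 0" by (rule antisym)
  then have "labs (P - N) = P + N" by (rule disj_pos_labs)
  then have "labs (u + v) = P + N" by (simp only: uv)
  also have "P + N = labs u + labs v" unfolding P_def N_def labs_pn[of u] labs_pn[of v] by (simp add: ac_simps)
  finally show ?thesis .
qed

lemma disj_diff: "inf (labs u) (labs v) = 0 \<Longrightarrow> labs (u - v) = labs u + labs (v::'a::banach_lattice)"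
  using disj_add[of u "- v"] labs_minus[of v] by simp

lemma labs_sum_diff: "sup (labs (a + b)) (labs (a - b)) = labs a + labs (b::'a::banach_lattice)"
proof -
  have s1: "a + sup b (-b) = sup (a + b) (a - b)" by (subst add_sup_distrib_left) simp
  have s2: "- a + sup b (-b) = sup (b - a) (- a - b)" by (subst add_sup_distrib_left) (simp add: algebra_simps)
  have "labs a + labs b = sup (sup (a + b) (a - b)) (sup (b - a) (- a - b))"
    unfolding labs_def by (subst add_sup_distrib_right) (simp only: s1 s2)
  moreover have "sup (labs (a + b)) (labs (a - b)) = sup (sup (a+b) (- a - b)) (sup (a-b) (b - a))"
    unfolding labs_def by (simp add: algebra_simps)
  ultimately show ?thesis by (simp add: sup_aci)
qed

lemma labs_double: "labs (a + a) = labs a + labs (a::'a::banach_lattice)"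
  using labs_sum_diff[of a a] labs_pos[of "a+a"] unfolding labs_def
  by (simp add: sup.absorb1)

lemma scaleR_sup: fixes x y :: "'a::banach_lattice"
  assumes "0 \<le> c" shows "c *\<^sub>R sup x y = sup (c *\<^sub>R x) (c *\<^sub>R y)"
proof (cases "c = 0")
  case True then show ?thesis by simp
next
  case False
  then have c: "0 < c" using assms by simp
  have 1: "sup (c *\<^sub>R x) (c *\<^sub>R y) \<le> c *\<^sub>R sup x y"
    using assms by (auto intro!: scaleR_left_mono)
  have "x \<le> (1/c) *\<^sub>R sup (c *\<^sub>R x) (c *\<^sub>R y)"
    using scaleR_left_mono[of "c *\<^sub>R x" "sup (c *\<^sub>R x) (c *\<^sub>R y)" "1/c"] c by simp
  moreover have "y \<le> (1/c) *\<^sub>R sup (c *\<^sub>R x) (c *\<^sub>R y)"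
    using scaleR_left_mono[of "c *\<^sub>R y" "sup (c *\<^sub>R x) (c *\<^sub>R y)" "1/c"] c by simp
  ultimately have "sup x y \<le> (1/c) *\<^sub>R sup (c *\<^sub>R x) (c *\<^sub>R y)" by simp
  then have "c *\<^sub>R sup x y \<le> c *\<^sub>R ((1/c) *\<^sub>R sup (c *\<^sub>R x) (c *\<^sub>R y))"
    using assms by (rule scaleR_left_mono)
  then have "c *\<^sub>R sup x y \<le> sup (c *\<^sub>R x) (c *\<^sub>R y)" using c by simp
  with 1 show ?thesis by (rule antisym[rotated])
qed

lemma labs_scale: "0 \<le> c \<Longrightarrow> labs (c *\<^sub>R a) = c *\<^sub>R labs (a::'a::banach_lattice)"
  unfolding labs_def by (simp add: scaleR_sup)

lemma norm_labs: "norm (labs a) = norm (a::'a::banach_lattice)"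
proof -
  have e: "sup (labs a) (- labs a) = sup a (- a)"
    using labs_id[OF labs_pos] unfolding labs_def by simp
  show ?thesis using lattice_norm[of "labs a" a] lattice_norm[of a "labs a"] e by simp
qed

lemma norm_eq_labs: "labs a = labs b \<Longrightarrow> norm a = norm (b::'a::banach_lattice)"
  using norm_labs[of a] norm_labs[of b] by simp

lemma norm_mono_pos: "0 \<le> d \<Longrightarrow> d \<le> v \<Longrightarrow> norm d \<le> norm (v::'a::banach_lattice)"
  using lattice_norm[of d v] labs_id[of d] labs_id[of v] unfolding labs_def by simp


lemma disj_T:
  fixes T :: "'a::banach_lattice \<Rightarrow> 'a"
  assumes "disjoint_preserving T"
  shows "inf (labs (T (pp a))) (labs (T (nn a))) = 0"
proof -
  have "disjoint_el (pp a) (nn a)" unfolding disjoint_el_def labs_id[OF pp_pos] labs_id[OF nn_pos]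
    by (rule pn_disj)
  then show ?thesis using assms unfolding disjoint_preserving_def disjoint_el_def by blast
qed

lemma labs_T_labs:
  fixes T :: "'a::banach_lattice \<Rightarrow> 'a"
  assumes lin: "linear T" and dp: "disjoint_preserving T"
  shows "labs (T (labs u)) = labs (T u)"
proof -
  have "T u = T (pp u - nn u)" by (rule arg_cong[OF pn_decomp])
  then have "T u = T (pp u) - T (nn u)" by (simp only: linear_diff[OF lin])
  then have 1: "labs (T u) = labs (T (pp u)) + labs (T (nn u))"
    using disj_diff[OF disj_T[OF dp]] by simp
  have "T (labs u) = T (pp u) + T (nn u)" by (simp only: linear_add[OF lin] labs_pn[of u])
  then have 2: "labs (T (labs u)) = labs (T (pp u)) + labs (T (nn u))"
    using disj_add[OF disj_T[OF dp]] by simp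
  show ?thesis using 1 2 by simp
qed

lemma ob_bound:
  fixes T :: "'a::banach_lattice \<Rightarrow> 'a"
  assumes "order_bounded_op T" "0 \<le> x"
  shows "\<exists>w. \<forall>v. 0 \<le> v \<and> v \<le> x \<longrightarrow> labs (T v) \<le> w"
proof -
  obtain a b where ab: "T ` {0..x} \<subseteq> {a..b}" using assms unfolding order_bounded_op_def by blast
  show ?thesis
  proof (intro exI allI impI)
    fix v assume "0 \<le> v \<and> v \<le> x"
    then have "T v \<in> {a..b}" using ab by (auto simp: image_subset_iff)
    then have "a \<le> T v" "T v \<le> b" by auto
    then have "T v \<le> sup (labs a) (labs b)" "- T v \<le> sup (labs a) (labs b)"
      using labs_ge[of a] labs_ge[of b]
      by (meson le_supI1 le_supI2 order_trans neg_le_iff_le)+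
    then show "labs (T v) \<le> sup (labs a) (labs b)" by (rule labs_le)
  qed
qed

lemma step_bd:
  fixes x y :: "'a::banach_lattice"
  assumes "0 \<le> y" "y \<le> x"
  shows "0 \<le> labs (y + y - x)" "labs (y + y - x) \<le> x"
proof -
  show "0 \<le> labs (y + y - x)" by (rule labs_pos)
  have "y + y \<le> x + x" using assms by (simp add: add_mono)
  then have 1: "y + y - x \<le> x" by (simp add: algebra_simps)
  have "0 \<le> y + y" using assms by simp
  then have 2: "- (y + y - x) \<le> x" by (simp add: algebra_simps)
  show "labs (y + y - x) \<le> x" using 1 2 by (rule labs_le)
qed

lemma step_ineq:
  fixes T :: "'a::banach_lattice \<Rightarrow> 'a"
  assumes lin: "linear T" and dp: "disjoint_preserving T"
  shows "labs (T y) + labs (T y) \<le> labs (T x) + labs (T (labs (y + y - x)))"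
proof -
  define d where "d = y + y - x"
  have "y + y = x + (pp d - nn d)" using pn_decomp[of d] unfolding d_def by (simp add: algebra_simps)
  then have "T y + T y = T x + (T (pp d) - T (nn d))"
    by (simp only: linear_add[OF lin, symmetric] linear_diff[OF lin, symmetric])
  then have "labs (T y) + labs (T y) = labs (T x + (T (pp d) - T (nn d)))"
    by (simp only: labs_double[symmetric])
  also have "\<dots> \<le> labs (T x) + labs (T (pp d) - T (nn d))" by (rule labs_tri)
  also have "labs (T (pp d) - T (nn d)) = labs (T (pp d) + T (nn d))"
    using disj_diff[OF disj_T[OF dp]] disj_add[OF disj_T[OF dp]] by simp
  also have "T (pp d) + T (nn d) = T (labs d)" by (simp only: linear_add[OF lin, symmetric] labs_pn[of d])
  finally show ?thesis unfolding d_def .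
qed

lemma T_mono:
  fixes T :: "'a::banach_lattice \<Rightarrow> 'a"
  assumes lin: "linear T" and dp: "disjoint_preserving T" and ob: "order_bounded_op T"
    and y: "0 \<le> y" "y \<le> x"
  shows "labs (T y) \<le> labs (T x)"
proof -
  have x: "0 \<le> x" using y by simp
  obtain w where w: "\<And>v. 0 \<le> v \<Longrightarrow> v \<le> x \<Longrightarrow> labs (T v) \<le> w"
    using ob_bound[OF ob x] by blast
  have w0: "0 \<le> w" using w[of 0] x labs_pos[of "T 0"] by (meson order_refl order_trans)
  have ind: "\<forall>y. 0 \<le> y \<and> y \<le> x \<longrightarrow> labs (T y) \<le> labs (T x) + ((1/2)^k) *\<^sub>R w" for k
  proof (induction k)
    case 0
    show ?case using w labs_pos[of "T x"] by (auto intro: add_increasing)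
  next
    case (Suc k)
    show ?case
    proof (intro allI impI)
      fix y assume yy: "0 \<le> y \<and> y \<le> x"
      let ?y' = "labs (y + y - x)"
      have "labs (T ?y') \<le> labs (T x) + ((1/2)^k) *\<^sub>R w"
        using Suc step_bd[of y x] yy by blast
      then have "labs (T y) + labs (T y) \<le> labs (T x) + (labs (T x) + ((1/2)^k) *\<^sub>R w)"
        using step_ineq[OF lin dp, of y x] by (meson add_left_mono order_trans)
      then have "(1/2::real) *\<^sub>R (labs (T y) + labs (T y)) \<le> (1/2::real) *\<^sub>R (labs (T x) + (labs (T x) + ((1/2)^k) *\<^sub>R w))"
        by (rule scaleR_left_mono) simp
      moreover have "(1/2::real) *\<^sub>R (labs (T y) + labs (T y)) = labs (T y)"
        by (simp only: scaleR_2[symmetric] scaleR_scaleR) simp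
      moreover have "(1/2::real) *\<^sub>R (labs (T x) + (labs (T x) + ((1/2)^k) *\<^sub>R w)) = labs (T x) + ((1/2)^Suc k) *\<^sub>R w"
      proof -
        have "(1/2::real) *\<^sub>R (labs (T x) + (labs (T x) + ((1/2)^k) *\<^sub>R w))
            = (1/2::real) *\<^sub>R (labs (T x) + labs (T x)) + (1/2::real) *\<^sub>R (((1/2)^k) *\<^sub>R w)"
          by (simp only: add.assoc[symmetric] scaleR_add_right)
        also have "(1/2::real) *\<^sub>R (labs (T x) + labs (T x)) = labs (T x)"
          by (simp only: scaleR_2[symmetric] scaleR_scaleR) simp
        finally show ?thesis by simp
      qed
      ultimately show "labs (T y) \<le> labs (T x) + ((1/2)^Suc k) *\<^sub>R w" by simp
    qed
  qed
  define d where "d = sup (labs (T y) - labs (T x)) 0"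
  have d0: "0 \<le> d" unfolding d_def by simp
  have nd: "norm d \<le> (1/2)^k * norm w" for k
  proof -
    have "labs (T y) - labs (T x) \<le> ((1/2)^k) *\<^sub>R w" using ind[of k] y by (simp add: algebra_simps)
    moreover have "0 \<le> ((1/2::real)^k) *\<^sub>R w" by (rule scaleR_nonneg_nonneg) (simp_all add: w0)
    ultimately have "d \<le> ((1/2)^k) *\<^sub>R w" unfolding d_def by simp
    then have "norm d \<le> norm (((1/2::real)^k) *\<^sub>R w)" by (rule norm_mono_pos[OF d0])
    then show ?thesis by simp
  qed
  have lim: "(\<lambda>k. (1/2::real)^k * norm w) \<longlonglongrightarrow> 0"
    by (intro tendsto_mult_left_zero LIMSEQ_realpow_zero) auto
  have "norm d \<le> 0"
    by (rule LIMSEQ_le_const[OF lim]) (use nd in auto)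
  then have "d = 0" by simp
  then have "labs (T y) - labs (T x) \<le> 0" unfolding d_def using sup.cobounded1[of "labs (T y) - labs (T x)" 0] by simp
  then show ?thesis by simp
qed

lemma T_add:
  fixes T :: "'a::banach_lattice \<Rightarrow> 'a"
  assumes lin: "linear T" and dp: "disjoint_preserving T" and ob: "order_bounded_op T"
    and xy: "0 \<le> x" "0 \<le> y"
  shows "labs (T (x + y)) = labs (T x) + labs (T y)"
proof -
  have "labs (T x) + labs (T y) = sup (labs (T x + T y)) (labs (T x - T y))"
    by (rule labs_sum_diff[symmetric])
  also have "\<dots> = sup (labs (T (x + y))) (labs (T (labs (x - y))))"
    by (simp only: linear_add[OF lin] linear_diff[OF lin] labs_T_labs[OF lin dp])
  also have "labs (T (labs (x - y))) \<le> labs (T (x + y))"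
  proof (rule T_mono[OF lin dp ob labs_pos])
    have "x - y \<le> x + y" "- (x - y) \<le> x + y" using xy by (simp_all add: algebra_simps add_increasing)
    then show "labs (x - y) \<le> x + y" by (rule labs_le)
  qed
  then have "sup (labs (T (x + y))) (labs (T (labs (x - y)))) = labs (T (x + y))"
    by (rule sup_absorb1)
  finally show ?thesis by simp
qed

definition Sop :: "('a::banach_lattice \<Rightarrow> 'a) \<Rightarrow> 'a \<Rightarrow> 'a" where
  "Sop T x = labs (T (pp x)) - labs (T (nn x))"

lemma S_repr:
  fixes T :: "'a::banach_lattice \<Rightarrow> 'a"
  assumes lin: "linear T" and dp: "disjoint_preserving T" and ob: "order_bounded_op T"
    and ab: "0 \<le> a" "0 \<le> b"
  shows "Sop T (a - b) = labs (T a) - labs (T b)"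
proof -
  let ?x = "a - b"
  have "pp ?x - nn ?x = a - b" using pn_decomp[of ?x] by simp
  then have e: "pp ?x + b = nn ?x + a" by (simp add: algebra_simps)
  have "labs (T (pp ?x)) + labs (T b) = labs (T (nn ?x)) + labs (T a)"
    using T_add[OF lin dp ob pp_pos ab(2), of ?x] T_add[OF lin dp ob nn_pos ab(1), of ?x] e by simp
  then show ?thesis unfolding Sop_def by (simp add: algebra_simps)
qed

lemma P_scale:
  fixes T :: "'a::banach_lattice \<Rightarrow> 'a"
  assumes lin: "linear T" and c: "0 \<le> c"
  shows "labs (T (c *\<^sub>R v)) = c *\<^sub>R labs (T v)"
  using linear_scale[OF lin] labs_scale[OF c] by simp

lemma S_linear:
  fixes T :: "'a::banach_lattice \<Rightarrow> 'a"
  assumes lin: "linear T" and dp: "disjoint_preserving T" and ob: "order_bounded_op T"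
  shows "linear (Sop T)"
proof (rule linearI)
  fix x y :: 'a
  have "x + y = (pp x + pp y) - (nn x + nn y)" using pn_decomp[of x] pn_decomp[of y]
    by (simp add: algebra_simps)
  then have "Sop T (x + y) = labs (T (pp x + pp y)) - labs (T (nn x + nn y))"
    using S_repr[OF lin dp ob add_nonneg_nonneg[OF pp_pos pp_pos] add_nonneg_nonneg[OF nn_pos nn_pos]]
    by simp
  also have "\<dots> = Sop T x + Sop T y"
    unfolding Sop_def using T_add[OF lin dp ob pp_pos pp_pos] T_add[OF lin dp ob nn_pos nn_pos]
    by (simp add: algebra_simps)
  finally show "Sop T (x + y) = Sop T x + Sop T y" .
next
  fix c :: real and x :: 'a
  show "Sop T (c *\<^sub>R x) = c *\<^sub>R Sop T x"
  proof (cases "0 \<le> c")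
    case True
    have "c *\<^sub>R x = c *\<^sub>R (pp x - nn x)" by (rule arg_cong[OF pn_decomp])
    then have "c *\<^sub>R x = c *\<^sub>R pp x - c *\<^sub>R nn x" by (simp only: scaleR_diff_right)
    then have "Sop T (c *\<^sub>R x) = labs (T (c *\<^sub>R pp x)) - labs (T (c *\<^sub>R nn x))"
      using S_repr[OF lin dp ob scaleR_nonneg_nonneg[OF True pp_pos] scaleR_nonneg_nonneg[OF True nn_pos]] by simp
    then show ?thesis using P_scale[OF lin True] unfolding Sop_def by (simp add: scaleR_diff_right)
  next
    case False
    then have c': "0 \<le> - c" by simp
    have "c *\<^sub>R x = c *\<^sub>R (pp x - nn x)" by (rule arg_cong[OF pn_decomp])
    then have "c *\<^sub>R x = (- c) *\<^sub>R nn x - (- c) *\<^sub>R pp x" by (simp add: scaleR_diff_right)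
    then have "Sop T (c *\<^sub>R x) = labs (T ((- c) *\<^sub>R nn x)) - labs (T ((- c) *\<^sub>R pp x))"
      using S_repr[OF lin dp ob scaleR_nonneg_nonneg[OF c' nn_pos] scaleR_nonneg_nonneg[OF c' pp_pos]] by simp
    then show ?thesis using P_scale[OF lin c'] unfolding Sop_def by (simp add: scaleR_diff_right)
  qed
qed

lemma S_labs:
  fixes T :: "'a::banach_lattice \<Rightarrow> 'a"
  assumes lin: "linear T" and dp: "disjoint_preserving T"
  shows "labs (Sop T x) = labs (T x)"
proof -
  have "labs (Sop T x) = labs (T (pp x)) + labs (T (nn x))"
    unfolding Sop_def by (rule disj_pos_labs[OF disj_T[OF dp]])
  also have "\<dots> = labs (T (pp x) - T (nn x))" by (rule disj_diff[OF disj_T[OF dp], symmetric])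
  also have "T (pp x) - T (nn x) = T x" by (simp only: linear_diff[OF lin, symmetric] pn_decomp[of x, symmetric])
  finally show ?thesis .
qed

lemma S_pos:
  fixes T :: "'a::banach_lattice \<Rightarrow> 'a"
  assumes lin: "linear T" and dp: "disjoint_preserving T" and ob: "order_bounded_op T"
    and x: "0 \<le> x"
  shows "Sop T x = labs (T x)"
  using S_repr[OF lin dp ob x order_refl] linear_0[OF lin] labs_id[of 0] by simp

theorem theorem2p37:
  fixes T :: "'a::banach_lattice \<Rightarrow> 'a"
  assumes "bounded_linear T"
    and "order_bounded_op T"
    and "disjoint_preserving T"
    and "uaw_DP T"
  shows "\<exists>S. is_modulus T S \<and> uaw_DP S"
proof -
  have lin: "linear T" using assms(1) bounded_linear.linear by blast
  note ob = assms(2) and dp = assms(3)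
  let ?S = "Sop T"
  have Slin: "linear ?S" by (rule S_linear[OF lin dp ob])
  have nS: "norm (?S x) = norm (T x)" for x :: 'a by (rule norm_eq_labs[OF S_labs[OF lin dp]])
  obtain K where K: "\<And>x. norm (T x) \<le> norm x * K"
    using bounded_linear.bounded[OF assms(1)] by blast
  have Sbl: "bounded_linear ?S"
    using Slin K nS by (intro bounded_linear_intro[where K=K]) (auto simp: linear_add linear_scale)
  have Sob: "order_bounded_op ?S" unfolding order_bounded_op_def
  proof (intro allI impI)
    fix x y :: 'a assume "x \<le> y"
    show "\<exists>a b. ?S ` {x..y} \<subseteq> {a..b}"
    proof (intro exI subsetI)
      fix z assume "z \<in> ?S ` {x..y}"
      then obtain v where v: "x \<le> v" "v \<le> y" "z = ?S v" by auto
      have "0 \<le> ?S (v - x)" using S_pos[OF lin dp ob, of "v - x"] v labs_pos by simp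
      moreover have "0 \<le> ?S (y - v)" using S_pos[OF lin dp ob, of "y - v"] v labs_pos by simp
      ultimately show "z \<in> {?S x..?S y}" using v linear_diff[OF Slin] by auto
    qed
  qed
  have mod: "is_modulus T ?S" unfolding is_modulus_def op_le_def Lb_def
  proof (intro conjI allI impI ballI)
    show "?S \<in> {T. linear T \<and> order_bounded_op T}" using Slin Sob by simp
  next
    fix x :: 'a assume "0 \<le> x" then show "T x \<le> ?S x" using S_pos[OF lin dp ob] labs_ge(1)[of "T x"] by simp
  next
    fix x :: 'a assume "0 \<le> x" then show "- T x \<le> ?S x" using S_pos[OF lin dp ob] labs_ge(2)[of "T x"] by simp
  next
    fix R and x :: 'a assume R: "R \<in> {T. linear T \<and> order_bounded_op T}"
      and h: "(\<forall>x. 0 \<le> x \<longrightarrow> T x \<le> R x) \<and> (\<forall>x. 0 \<le> x \<longrightarrow> - T x \<le> R x)" and x: "0 \<le> x"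
    show "?S x \<le> R x" unfolding S_pos[OF lin dp ob x] using h x by (intro labs_le) auto
  qed
  have "uaw_DP ?S" unfolding uaw_DP_def
    using Sbl assms(4) nS unfolding uaw_DP_def by simp
  with mod show ?thesis by blast
qed

end
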